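(* Let $A \in \mathbb{C}^{n \times n}$, and fix $A^-\in A\{1\}$ and $A^{GD}\in A\{GD\}$. For $X\in\mathbb{C}^{n\times n}$ the following are equivalent: (i) $X = A^{GD}AA^{-}$; (ii) $XAX=X$, $R(X)=R(A^{GD}A)$, and $N(X)=N(AA^{-})$; (iii) $XAX=X$, $XA=A^{GD}A$, and $AX=AA^{-}$.
   Context: For $A\in\mathbb{C}^{n\times n}$, $ind(A)$ is the smallest nonnegative integer $k$ with $\mathrm{rank}(A^k)=\mathrm{rank}(A^{k+1})$. $A\{1\}$ is the set of matrices $X$ with $AXA=A$. With $k=ind(A)$, $A\{GD\}$ is the set of G-Drazin inverses of $A$: matrices $X$ with $AXA=A$, $XA^{k+1}=A^k$, $A^{k+1}X=A^k$. $R(\cdot)$, $N(\cdot)$ denote range and null space. *)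

theory Defs
  imports "HOL-Analysis.Analysis"
begin

primrec matpow :: "'a::semiring_1^'n^'n \<Rightarrow> nat \<Rightarrow> 'a^'n^'n" where
  "matpow A 0 = mat 1"
| "matpow A (Suc k) = A ** matpow A k"

definition ind :: "'a::field^'n^'n \<Rightarrow> nat" where
  "ind A = (LEAST k. rank (matpow A k) = rank (matpow A (Suc k)))"

definition inner_inverses :: "'a::field^'n^'n \<Rightarrow> ('a^'n^'n) set" where
  "inner_inverses A = {X. A ** X ** A = A}"

definition gd_inverses :: "'a::field^'n^'n \<Rightarrow> ('a^'n^'n) set" where
  "gd_inverses A = {X. A ** X ** A = A
      \<and> X ** matpow A (Suc (ind A)) = matpow A (ind A)
      \<and> matpow A (Suc (ind A)) ** X = matpow A (ind A)}"

definition mat_range :: "'a::field^'n^'m \<Rightarrow> ('a^'m) set" where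
  "mat_range X = range (\<lambda>x. X *v x)"

definition mat_null :: "'a::field^'n^'m \<Rightarrow> ('a^'n) set" where
  "mat_null X = {x. X *v x = 0}"

end

theory Submission
  imports Defs
begin

lemma rng_mul: "mat_range (P ** Q) \<subseteq> mat_range (P :: 'a::field^'n^'n)"
  unfolding mat_range_def by (auto simp: matrix_vector_mul_assoc[symmetric])

lemma null_mul: "mat_null Q \<subseteq> mat_null (P ** (Q :: 'a::field^'n^'n))"
  unfolding mat_null_def by (auto simp: matrix_vector_mul_assoc[symmetric])

lemma rngL:
  fixes Y Z B :: "'a::field^'n^'n"
  assumes "mat_range Z \<subseteq> mat_range Y" "B ** Y = Y"
  shows "B ** Z = Z"
proof -
  have "(B ** Z) *v v = Z *v v" for v
  proof -
    have "Z *v v \<in> mat_range Y" using assms(1) unfolding mat_range_def by auto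
    then obtain w where w: "Z *v v = Y *v w" unfolding mat_range_def by auto
    have "(B ** Z) *v v = B *v (Y *v w)" by (simp add: matrix_vector_mul_assoc[symmetric] w)
    also have "\<dots> = Y *v w" by (simp add: matrix_vector_mul_assoc assms(2))
    finally show ?thesis using w by simp
  qed
  then show ?thesis by (simp add: matrix_eq)
qed

lemma nullL:
  fixes Y Z B :: "'a::field^'n^'n"
  assumes "mat_null Y \<subseteq> mat_null Z" "Y ** B = Y"
  shows "Z ** B = Z"
proof -
  have "(Z ** B) *v v = Z *v v" for v
  proof -
    have "Y *v (v - B *v v) = 0"
      by (simp add: matrix_vector_mult_diff_distrib matrix_vector_mul_assoc assms(2))
    then have "Z *v (v - B *v v) = 0" using assms(1) unfolding mat_null_def by auto
    then show ?thesis
      by (simp add: matrix_vector_mult_diff_distrib matrix_vector_mul_assoc)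
  qed
  then show ?thesis by (simp add: matrix_eq)
qed

theorem theorem2p7:
  fixes A Am Agd X :: "complex^'n^'n"
  assumes "Am \<in> inner_inverses A"
    and "Agd \<in> gd_inverses A"
  shows "(X = Agd ** A ** Am
          \<longleftrightarrow> (X ** A ** X = X \<and> mat_range X = mat_range (Agd ** A)
               \<and> mat_null X = mat_null (A ** Am)))
       \<and> (X = Agd ** A ** Am
          \<longleftrightarrow> (X ** A ** X = X \<and> X ** A = Agd ** A \<and> A ** X = A ** Am))"
proof -
  have M: "A ** Am ** A = A" using assms(1) unfolding inner_inverses_def by simp
  have G: "A ** Agd ** A = A" using assms(2) unfolding gd_inverses_def by simp
  let ?X0 = "Agd ** A ** Am"
  have p1: "?X0 ** A ** ?X0 = ?X0"
    by (metis G M matrix_mul_assoc)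
  have p2: "?X0 ** A = Agd ** A" by (metis M matrix_mul_assoc)
  have p3: "A ** ?X0 = A ** Am" by (metis G matrix_mul_assoc)
  have r0: "mat_range ?X0 = mat_range (Agd ** A)"
    using rng_mul[of "Agd ** A" Am] rng_mul[of ?X0 A] p2 by auto
  have n0: "mat_null ?X0 = mat_null (A ** Am)"
    using null_mul[of "A ** Am" Agd] null_mul[of ?X0 A] p3 by (auto simp: matrix_mul_assoc)
  have iii_i: "X = ?X0" if h: "X ** A ** X = X" "X ** A = Agd ** A" "A ** X = A ** Am"
    by (metis h matrix_mul_assoc)
  have ii_iii: "X ** A = Agd ** A \<and> A ** X = A ** Am"
    if h: "X ** A ** X = X" "mat_range X = mat_range (Agd ** A)" "mat_null X = mat_null (A ** Am)"
  proof
    have "(X ** A) ** (Agd ** A) = Agd ** A"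
      by (rule rngL[of _ X]) (use h in \<open>auto simp: matrix_mul_assoc\<close>)
    then show "X ** A = Agd ** A" by (metis G matrix_mul_assoc)
    have "(A ** Am) ** (A ** X) = A ** Am"
      by (rule nullL[of X]) (use h in \<open>auto simp: matrix_mul_assoc\<close>)
    then show "A ** X = A ** Am" by (metis M matrix_mul_assoc)
  qed
  show ?thesis
    using p1 p2 p3 r0 n0 iii_i ii_iii by blast
qed

end
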